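(* Let $L$ be a multisorted algebra in the positive existential signature satisfying axioms (1), (2), (3), (8), and let $F$ be a prime filter on sort $n$ of $L$. Let $F_1,\dots,F_n$ be distinct symbols and $W=\{F_1,\dots,F_n\}$. Define $\varphi\colon L\to A(W)$ on each sort $k$ by: for each substitution $\alpha\colon k\to n$, $\alpha^{\mathrm{tuple}}(F_1,\dots,F_n)\in\varphi(r)$ if and only if $\alpha(r)\in F$. Then $\varphi$ is an almost morphism.
   Context: Signature. There is a sort $n$ for each $n\ge0$. For every function $\alpha\colon\{1,\dots,n\}\to\{1,\dots,k\}$ there is a unary function symbol ("substitution") $\alpha\colon n\to k$ (argument of sort $n$, value of sort $k$). Each sort has $0,1,\vee,\wedge$; for each $n$ there is $\exists\colon n+1\to n$ (positive existential signature). For $\alpha\colon k\to n$, $\beta\colon n\to m$, $\beta\circ\alpha$ is the substitution symbol of the composite function. The associated cylindrification of $\exists\colon n+1\to n$ is $c\colon n\to n+1$, $c(i)=i$. For a set $W$: $\alpha^{\mathrm{tuple}}(x_1,\dots,x_k)=(x_{\alpha(1)},\dots,x_{\alpha(n)})$, $\alpha^{\mathrm{relation}}(r)=\{\bar x\in W^k:\alpha^{\mathrm{tuple}}(\bar x)\in r\}$. The positive existential algebra $A(W)$ interprets sort $n$ as $\mathcal P(W^n)$, $\alpha$ as $\alpha^{\mathrm{relation}}$, $0,1,\vee,\wedge$ as $\emptyset,W^n,\cup,\cap$, and $\exists(r)=\{\bar x:\exists y\,(\bar x,y)\in r\}$. Since the $F_i$ are distinct, each $k$-tuple from $W$ is $\alpha^{\mathrm{tuple}}(F_1,\dots,F_n)$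 for exactly one $\alpha\colon k\to n$. An almost morphism $\varphi\colon L\to A(W)$ is a sort-preserving family of maps commuting with all substitutions and with $0,1,\vee,\wedge$, and satisfying $\exists(\varphi(r))\subseteq\varphi(\exists(r))$ for all $r$. Axioms: (1) each sort is a bounded distributive lattice; (2) substitutions preserve $0,1,\vee,\wedge$; (3) $(\beta\circ\alpha)(r)=\beta(\alpha(r))$; (8) $r\le c(\exists(r))$ for all $r$ of sort $n+1$ (where $x\le y$ means $x=x\wedge y$). A prime filter is a proper, nonempty, upward-closed, $\wedge$-closed subset of a sort with $x\vee y\in F\Rightarrow x\in F$ or $y\in F$. *)

theory Defs
  imports Main
begin

text \<open>A function alpha from {1..n} to {1..k}, represented extensionally
  (value 0 outside {1..n}), so that substitution symbols correspond exactly
  to such functions.\<close>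
definition sfun :: "nat \<Rightarrow> nat \<Rightarrow> (nat \<Rightarrow> nat) \<Rightarrow> bool" where
  "sfun n k \<alpha> \<longleftrightarrow> (\<forall>i\<in>{1..n}. \<alpha> i \<in> {1..k}) \<and> (\<forall>i. i \<notin> {1..n} \<longrightarrow> \<alpha> i = 0)"

definition cyl :: "nat \<Rightarrow> nat \<Rightarrow> nat" where
  "cyl n i = (if i \<in> {1..n} then i else 0)"

text \<open>A multisorted algebra in the positive existential signature.
  pe_sub A n k alpha : sort n -> sort k  (alpha a function {1..n} -> {1..k});
  pe_ex A n : sort n+1 -> sort n.\<close>
record 'a pe_alg =
  pe_car  :: "nat \<Rightarrow> 'a set"
  pe_sub  :: "nat \<Rightarrow> nat \<Rightarrow> (nat \<Rightarrow> nat) \<Rightarrow> 'a \<Rightarrow> 'a"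
  pe_bot  :: "nat \<Rightarrow> 'a"
  pe_top  :: "nat \<Rightarrow> 'a"
  pe_join :: "nat \<Rightarrow> 'a \<Rightarrow> 'a \<Rightarrow> 'a"
  pe_meet :: "nat \<Rightarrow> 'a \<Rightarrow> 'a \<Rightarrow> 'a"
  pe_ex   :: "nat \<Rightarrow> 'a \<Rightarrow> 'a"

definition pe_algebra :: "'a pe_alg \<Rightarrow> bool" where
  "pe_algebra L \<longleftrightarrow>
     (\<forall>n k \<alpha> r. sfun n k \<alpha> \<longrightarrow> r \<in> pe_car L n \<longrightarrow> pe_sub L n k \<alpha> r \<in> pe_car L k) \<and>
     (\<forall>n. pe_bot L n \<in> pe_car L n \<and> pe_top L n \<in> pe_car L n) \<and>
     (\<forall>n x y. x \<in> pe_car L n \<longrightarrow> y \<in> pe_car L n \<longrightarrow>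
        pe_join L n x y \<in> pe_car L n \<and> pe_meet L n x y \<in> pe_car L n) \<and>
     (\<forall>n r. r \<in> pe_car L (Suc n) \<longrightarrow> pe_ex L n r \<in> pe_car L n)"

definition ax1 :: "'a pe_alg \<Rightarrow> bool" where
  "ax1 L \<longleftrightarrow> (\<forall>n. \<forall>x\<in>pe_car L n. \<forall>y\<in>pe_car L n. \<forall>z\<in>pe_car L n.
     pe_join L n x (pe_join L n y z) = pe_join L n (pe_join L n x y) z \<and>
     pe_meet L n x (pe_meet L n y z) = pe_meet L n (pe_meet L n x y) z \<and>
     pe_join L n x y = pe_join L n y x \<and>
     pe_meet L n x y = pe_meet L n y x \<and>
     pe_join L n x (pe_meet L n x y) = x \<and>
     pe_meet L n x (pe_join L n x y) = x \<and>
     pe_meet L n x (pe_join L n y z) = pe_join L n (pe_meet L n x y) (pe_meet L n x z) \<and>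
     pe_join L n x (pe_bot L n) = x \<and>
     pe_meet L n x (pe_top L n) = x)"

definition ax2 :: "'a pe_alg \<Rightarrow> bool" where
  "ax2 L \<longleftrightarrow> (\<forall>n k \<alpha>. sfun n k \<alpha> \<longrightarrow>
     pe_sub L n k \<alpha> (pe_bot L n) = pe_bot L k \<and>
     pe_sub L n k \<alpha> (pe_top L n) = pe_top L k \<and>
     (\<forall>x\<in>pe_car L n. \<forall>y\<in>pe_car L n.
        pe_sub L n k \<alpha> (pe_join L n x y) = pe_join L k (pe_sub L n k \<alpha> x) (pe_sub L n k \<alpha> y) \<and>
        pe_sub L n k \<alpha> (pe_meet L n x y) = pe_meet L k (pe_sub L n k \<alpha> x) (pe_sub L n k \<alpha> y)))"

definition ax3 :: "'a pe_alg \<Rightarrow> bool" where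
  "ax3 L \<longleftrightarrow> (\<forall>k n m \<alpha> \<beta>. sfun k n \<alpha> \<longrightarrow> sfun n m \<beta> \<longrightarrow>
     (\<forall>r\<in>pe_car L k. pe_sub L k m (\<beta> \<circ> \<alpha>) r = pe_sub L n m \<beta> (pe_sub L k n \<alpha> r)))"

definition pe_le :: "'a pe_alg \<Rightarrow> nat \<Rightarrow> 'a \<Rightarrow> 'a \<Rightarrow> bool" where
  "pe_le L n x y \<longleftrightarrow> x = pe_meet L n x y"

definition ax8 :: "'a pe_alg \<Rightarrow> bool" where
  "ax8 L \<longleftrightarrow> (\<forall>n. \<forall>r\<in>pe_car L (Suc n).
     pe_le L (Suc n) r (pe_sub L n (Suc n) (cyl n) (pe_ex L n r)))"

definition prime_filter :: "'a pe_alg \<Rightarrow> nat \<Rightarrow> 'a set \<Rightarrow> bool" where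
  "prime_filter L n F \<longleftrightarrow>
     F \<subseteq> pe_car L n \<and> F \<noteq> pe_car L n \<and> F \<noteq> {} \<and>
     (\<forall>x\<in>F. \<forall>y\<in>pe_car L n. pe_le L n x y \<longrightarrow> y \<in> F) \<and>
     (\<forall>x\<in>F. \<forall>y\<in>F. pe_meet L n x y \<in> F) \<and>
     (\<forall>x\<in>pe_car L n. \<forall>y\<in>pe_car L n. pe_join L n x y \<in> F \<longrightarrow> x \<in> F \<or> y \<in> F)"

text \<open>The algebra A(W). Tuples in W^n are lists of length n (coordinate i is xs ! (i-1)).\<close>
definition tuples :: "'w set \<Rightarrow> nat \<Rightarrow> 'w list set" where
  "tuples W n = {xs. length xs = n \<and> set xs \<subseteq> W}"

definition tuple_sub :: "nat \<Rightarrow> (nat \<Rightarrow> nat) \<Rightarrow> 'w list \<Rightarrow> 'w list" where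
  "tuple_sub n \<alpha> xs = map (\<lambda>i. xs ! (\<alpha> i - 1)) [1..<Suc n]"

definition rel_sub :: "'w set \<Rightarrow> nat \<Rightarrow> nat \<Rightarrow> (nat \<Rightarrow> nat) \<Rightarrow> 'w list set \<Rightarrow> 'w list set" where
  "rel_sub W n k \<alpha> R = {xs \<in> tuples W k. tuple_sub n \<alpha> xs \<in> R}"

definition rel_ex :: "'w set \<Rightarrow> nat \<Rightarrow> 'w list set \<Rightarrow> 'w list set" where
  "rel_ex W n R = {xs \<in> tuples W n. \<exists>y\<in>W. xs @ [y] \<in> R}"

definition almost_morphism :: "'a pe_alg \<Rightarrow> 'w set \<Rightarrow> (nat \<Rightarrow> 'a \<Rightarrow> 'w list set) \<Rightarrow> bool" where
  "almost_morphism L W \<phi> \<longleftrightarrow>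
     (\<forall>n. \<forall>r\<in>pe_car L n. \<phi> n r \<subseteq> tuples W n) \<and>
     (\<forall>n k \<alpha>. sfun n k \<alpha> \<longrightarrow> (\<forall>r\<in>pe_car L n.
        \<phi> k (pe_sub L n k \<alpha> r) = rel_sub W n k \<alpha> (\<phi> n r))) \<and>
     (\<forall>n. \<phi> n (pe_bot L n) = {} \<and> \<phi> n (pe_top L n) = tuples W n) \<and>
     (\<forall>n. \<forall>x\<in>pe_car L n. \<forall>y\<in>pe_car L n.
        \<phi> n (pe_join L n x y) = \<phi> n x \<union> \<phi> n y \<and>
        \<phi> n (pe_meet L n x y) = \<phi> n x \<inter> \<phi> n y) \<and>
     (\<forall>n. \<forall>r\<in>pe_car L (Suc n). rel_ex W n (\<phi> (Suc n) r) \<subseteq> \<phi> n (pe_ex L n r))"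

definition phi_of :: "'a pe_alg \<Rightarrow> nat \<Rightarrow> 'a set \<Rightarrow> (nat \<Rightarrow> 'w) \<Rightarrow> nat \<Rightarrow> 'a \<Rightarrow> 'w list set" where
  "phi_of L n Fl Fs k r =
     {tuple_sub k \<alpha> (map Fs [1..<Suc n]) | \<alpha>. sfun k n \<alpha> \<and> pe_sub L k n \<alpha> r \<in> Fl}"

end

theory Submission
  imports Defs
begin

declare upt_Suc[simp del]

lemma ts_length[simp]: "length (tuple_sub k \<alpha> xs) = k"
  by (simp add: tuple_sub_def)

lemma ts_nth: "j < k \<Longrightarrow> tuple_sub k \<alpha> xs ! j = xs ! (\<alpha> (Suc j) - 1)"
  unfolding tuple_sub_def by (subst nth_map) auto

lemma sfun_val: "sfun k n \<alpha> \<Longrightarrow> j < k \<Longrightarrow> \<alpha> (Suc j) \<in> {1..n}"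
  unfolding sfun_def by auto

lemma tl_nth:
  assumes "sfun k n \<alpha>" "j < k"
  shows "tuple_sub k \<alpha> (map Fs [1..<Suc n]) ! j = Fs (\<alpha> (Suc j))"
proof -
  have "\<alpha> (Suc j) \<in> {1..n}" using sfun_val[OF assms] .
  then have lt: "\<alpha> (Suc j) - 1 < n" "Suc (\<alpha> (Suc j) - 1) = \<alpha> (Suc j)" by auto
  have "tuple_sub k \<alpha> (map Fs [1..<Suc n]) ! j = map Fs [1..<Suc n] ! (\<alpha> (Suc j) - 1)"
    using assms(2) by (rule ts_nth)
  also have "\<dots> = Fs (1 + (\<alpha> (Suc j) - 1))" using lt(1) by (simp del: upt_Suc)
  finally show ?thesis using lt(2) by simp
qed

lemma tl_inj:
  assumes "sfun k n \<alpha>" "sfun k n \<beta>" "inj_on Fs {1..n}"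
    and "tuple_sub k \<alpha> (map Fs [1..<Suc n]) = tuple_sub k \<beta> (map Fs [1..<Suc n])"
  shows "\<alpha> = \<beta>"
proof
  fix i show "\<alpha> i = \<beta> i"
  proof (cases "i \<in> {1..k}")
    case True
    then obtain j where j: "i = Suc j" "j < k" by (cases i) auto
    have "Fs (\<alpha> i) = Fs (\<beta> i)"
      using tl_nth[OF assms(1) j(2), of Fs] tl_nth[OF assms(2) j(2), of Fs] assms(4) j(1) by metis
    moreover have "\<alpha> i \<in> {1..n}" "\<beta> i \<in> {1..n}" using sfun_val[OF assms(1) j(2)] sfun_val[OF assms(2) j(2)] j by auto
    ultimately show ?thesis using assms(3) by (meson inj_onD)
  next
    case False then show ?thesis using assms(1,2) unfolding sfun_def by auto
  qed
qed

lemma tl_in: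
  assumes "sfun k n \<alpha>"
  shows "tuple_sub k \<alpha> (map Fs [1..<Suc n]) \<in> tuples (Fs ` {1..n}) k"
proof -
  have "\<forall>j<k. tuple_sub k \<alpha> (map Fs [1..<Suc n]) ! j \<in> Fs ` {1..n}"
  proof (intro allI impI)
    fix j assume j: "j < k"
    have e: "tuple_sub k \<alpha> (map Fs [1..<Suc n]) ! j = Fs (\<alpha> (Suc j))" by (rule tl_nth[OF assms j])
    show "tuple_sub k \<alpha> (map Fs [1..<Suc n]) ! j \<in> Fs ` {1..n}"
      unfolding e using sfun_val[OF assms j] by (rule imageI)
  qed
  then have "set (tuple_sub k \<alpha> (map Fs [1..<Suc n])) \<subseteq> Fs ` {1..n}"
    by (metis in_set_conv_nth subsetI ts_length)
  then show ?thesis unfolding tuples_def by simp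
qed

lemma tl_surj:
  assumes "xs \<in> tuples (Fs ` {1..n}) k"
  shows "\<exists>\<alpha>. sfun k n \<alpha> \<and> xs = tuple_sub k \<alpha> (map Fs [1..<Suc n])"
proof -
  define \<alpha> where "\<alpha> i = (if i \<in> {1..k} then (SOME j. j \<in> {1..n} \<and> xs ! (i - 1) = Fs j) else 0)" for i
  have len: "length xs = k" and sub: "set xs \<subseteq> Fs ` {1..n}" using assms by (auto simp: tuples_def)
  have ex: "\<alpha> i \<in> {1..n} \<and> xs ! (i - 1) = Fs (\<alpha> i)" if "i \<in> {1..k}" for i
  proof -
    have "xs ! (i - 1) \<in> set xs" using that len by auto
    then have "\<exists>j. j \<in> {1..n} \<and> xs ! (i - 1) = Fs j" using sub by blast
    then have "(SOME j. j \<in> {1..n} \<and> xs ! (i - 1) = Fs j) \<in> {1..n} \<and> xs ! (i - 1) = Fs (SOME j. j \<in> {1..n} \<and> xs ! (i - 1) = Fs j)"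
      by (rule someI_ex)
    moreover have "\<alpha> i = (SOME j. j \<in> {1..n} \<and> xs ! (i - 1) = Fs j)" unfolding \<alpha>_def using that by simp
    ultimately show ?thesis by simp
  qed
  have sf: "sfun k n \<alpha>" unfolding sfun_def using ex by (auto simp: \<alpha>_def)
  have "xs = tuple_sub k \<alpha> (map Fs [1..<Suc n])"
  proof (rule nth_equalityI)
    show "length xs = length (tuple_sub k \<alpha> (map Fs [1..<Suc n]))" using len by simp
    fix j assume "j < length xs"
    then have j: "j < k" using len by simp
    have "xs ! j = Fs (\<alpha> (Suc j))" using ex[of "Suc j"] j by auto
    also have "\<dots> = tuple_sub k \<alpha> (map Fs [1..<Suc n]) ! j" by (rule tl_nth[OF sf j, symmetric])
    finally show "xs ! j = tuple_sub k \<alpha> (map Fs [1..<Suc n]) ! j" .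
  qed
  then show ?thesis using sf by blast
qed

lemma sfun_comp:
  assumes b: "sfun m k \<beta>" and a: "sfun k n \<alpha>" shows "sfun m n (\<alpha> \<circ> \<beta>)"
proof -
  have b1: "\<And>i. i \<in> {1..m} \<Longrightarrow> \<beta> i \<in> {1..k}" and b2: "\<And>i. i \<notin> {1..m} \<Longrightarrow> \<beta> i = 0"
    using b unfolding sfun_def by blast+
  have a1: "\<And>i. i \<in> {1..k} \<Longrightarrow> \<alpha> i \<in> {1..n}" and a2: "\<And>i. i \<notin> {1..k} \<Longrightarrow> \<alpha> i = 0"
    using a unfolding sfun_def by blast+
  have "\<alpha> 0 = 0" using a2 by simp
  then show ?thesis unfolding sfun_def using a1 b1 b2 by simp
qed

lemma tl_comp:
  assumes "sfun m k \<beta>" "sfun k n \<alpha>"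
  shows "tuple_sub m \<beta> (tuple_sub k \<alpha> (map Fs [1..<Suc n])) = tuple_sub m (\<alpha> \<circ> \<beta>) (map Fs [1..<Suc n])"
proof (rule nth_equalityI)
  show "length (tuple_sub m \<beta> (tuple_sub k \<alpha> (map Fs [1..<Suc n]))) =
    length (tuple_sub m (\<alpha> \<circ> \<beta>) (map Fs [1..<Suc n]))" by simp
  fix j assume "j < length (tuple_sub m \<beta> (tuple_sub k \<alpha> (map Fs [1..<Suc n])))"
  then have j: "j < m" by simp
  have b: "\<beta> (Suc j) \<in> {1..k}" using sfun_val[OF assms(1) j] .
  define i where "i = \<beta> (Suc j) - 1"
  have i: "\<beta> (Suc j) = Suc i" "i < k" using b unfolding i_def by auto
  show "tuple_sub m \<beta> (tuple_sub k \<alpha> (map Fs [1..<Suc n])) ! j = tuple_sub m (\<alpha> \<circ> \<beta>) (map Fs [1..<Suc n]) ! j"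
  proof -
    have "tuple_sub m \<beta> (tuple_sub k \<alpha> (map Fs [1..<Suc n])) ! j = tuple_sub k \<alpha> (map Fs [1..<Suc n]) ! (\<beta> (Suc j) - 1)"
      by (rule ts_nth[OF j])
    also have "\<dots> = tuple_sub k \<alpha> (map Fs [1..<Suc n]) ! i" using i(1) by simp
    also have "\<dots> = Fs (\<alpha> (Suc i))" by (rule tl_nth[OF assms(2) i(2)])
    also have "\<dots> = Fs ((\<alpha> \<circ> \<beta>) (Suc j))" using i(1) by simp
    also have "\<dots> = tuple_sub m (\<alpha> \<circ> \<beta>) (map Fs [1..<Suc n]) ! j"
      by (rule tl_nth[OF sfun_comp[OF assms] j, symmetric])
    finally show ?thesis .
  qed
qed

lemma sfun_cyl: "sfun k (Suc k) (cyl k)"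
  unfolding sfun_def cyl_def by auto

lemma tl_cyl:
  assumes "sfun (Suc k) n \<gamma>" "xs @ [y] = tuple_sub (Suc k) \<gamma> (map Fs [1..<Suc n])"
  shows "xs = tuple_sub k (\<gamma> \<circ> cyl k) (map Fs [1..<Suc n])"
proof (rule nth_equalityI)
  have "length (xs @ [y]) = Suc k" using assms(2) by simp
  then show l: "length xs = length (tuple_sub k (\<gamma> \<circ> cyl k) (map Fs [1..<Suc n]))" by simp
  fix j assume "j < length xs"
  then have j: "j < k" using l by simp
  have "xs ! j = (xs @ [y]) ! j" using \<open>j < length xs\<close> by (simp add: nth_append)
  also have "\<dots> = tuple_sub (Suc k) \<gamma> (map Fs [1..<Suc n]) ! j" using assms(2) by simp
  also have "\<dots> = Fs (\<gamma> (Suc j))" using j by (intro tl_nth[OF assms(1)]) simp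
  also have "\<dots> = Fs ((\<gamma> \<circ> cyl k) (Suc j))" using j by (simp add: cyl_def)
  also have "\<dots> = tuple_sub k (\<gamma> \<circ> cyl k) (map Fs [1..<Suc n]) ! j"
    by (rule tl_nth[OF sfun_comp[OF sfun_cyl assms(1)] j, symmetric])
  finally show "xs ! j = tuple_sub k (\<gamma> \<circ> cyl k) (map Fs [1..<Suc n]) ! j" .
qed

lemma mem_phi:
  assumes "inj_on Fs {1..n}" "sfun k n \<alpha>"
  shows "tuple_sub k \<alpha> (map Fs [1..<Suc n]) \<in> phi_of L n F Fs k r \<longleftrightarrow> pe_sub L k n \<alpha> r \<in> F"
proof
  assume "tuple_sub k \<alpha> (map Fs [1..<Suc n]) \<in> phi_of L n F Fs k r"
  then obtain \<beta> where b: "tuple_sub k \<alpha> (map Fs [1..<Suc n]) = tuple_sub k \<beta> (map Fs [1..<Suc n])"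
    "sfun k n \<beta>" "pe_sub L k n \<beta> r \<in> F" unfolding phi_of_def by (simp only: mem_Collect_eq) blast
  have "\<alpha> = \<beta>" by (rule tl_inj[OF assms(2) b(2) assms(1) b(1)])
  then show "pe_sub L k n \<alpha> r \<in> F" using b(3) by simp
next
  assume "pe_sub L k n \<alpha> r \<in> F"
  then show "tuple_sub k \<alpha> (map Fs [1..<Suc n]) \<in> phi_of L n F Fs k r"
    unfolding phi_of_def using assms(2) by blast
qed

lemma phi_elem:
  "xs \<in> phi_of L n F Fs k r \<Longrightarrow> \<exists>\<alpha>. sfun k n \<alpha> \<and> xs = tuple_sub k \<alpha> (map Fs [1..<Suc n]) \<and> pe_sub L k n \<alpha> r \<in> F"
  unfolding phi_of_def by (simp only: mem_Collect_eq) blast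

lemma phi_ext:
  assumes "\<And>\<alpha>. sfun k n \<alpha> \<Longrightarrow> tuple_sub k \<alpha> (map Fs [1..<Suc n]) \<in> A \<longleftrightarrow> tuple_sub k \<alpha> (map Fs [1..<Suc n]) \<in> B"
    and "A \<subseteq> tuples (Fs ` {1..n}) k" "B \<subseteq> tuples (Fs ` {1..n}) k"
  shows "A = B"
proof (rule set_eqI)
  fix xs
  show "xs \<in> A \<longleftrightarrow> xs \<in> B"
  proof (cases "xs \<in> tuples (Fs ` {1..n}) k")
    case True
    from tl_surj[OF True] obtain \<alpha> where a: "sfun k n \<alpha>" "xs = tuple_sub k \<alpha> (map Fs [1..<Suc n])"
      by (elim exE conjE)
    show ?thesis unfolding a(2) by (rule assms(1)[OF a(1)])
  next
    case False then show ?thesis using assms(2,3) by blast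
  qed
qed

lemma ax1D:
  assumes "ax1 L" "x \<in> pe_car L n" "y \<in> pe_car L n" "z \<in> pe_car L n"
  shows "pe_join L n x (pe_join L n y z) = pe_join L n (pe_join L n x y) z \<and>
     pe_meet L n x (pe_meet L n y z) = pe_meet L n (pe_meet L n x y) z \<and>
     pe_join L n x y = pe_join L n y x \<and>
     pe_meet L n x y = pe_meet L n y x \<and>
     pe_join L n x (pe_meet L n x y) = x \<and>
     pe_meet L n x (pe_join L n x y) = x \<and>
     pe_meet L n x (pe_join L n y z) = pe_join L n (pe_meet L n x y) (pe_meet L n x z) \<and>
     pe_join L n x (pe_bot L n) = x \<and>
     pe_meet L n x (pe_top L n) = x"
proof -
  have "\<forall>x\<in>pe_car L n. \<forall>y\<in>pe_car L n. \<forall>z\<in>pe_car L n.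
     pe_join L n x (pe_join L n y z) = pe_join L n (pe_join L n x y) z \<and>
     pe_meet L n x (pe_meet L n y z) = pe_meet L n (pe_meet L n x y) z \<and>
     pe_join L n x y = pe_join L n y x \<and>
     pe_meet L n x y = pe_meet L n y x \<and>
     pe_join L n x (pe_meet L n x y) = x \<and>
     pe_meet L n x (pe_join L n x y) = x \<and>
     pe_meet L n x (pe_join L n y z) = pe_join L n (pe_meet L n x y) (pe_meet L n x z) \<and>
     pe_join L n x (pe_bot L n) = x \<and>
     pe_meet L n x (pe_top L n) = x"
    using assms(1) unfolding ax1_def by (rule spec)
  from this[rule_format, OF assms(2) assms(3) assms(4)] show ?thesis .
qed
context
  fixes L :: "'a pe_alg" and n :: nat
  assumes A1: "ax1 L"
begin
lemma ax1_mcomm: "x \<in> pe_car L n \<Longrightarrow> y \<in> pe_car L n \<Longrightarrow> pe_meet L n x y = pe_meet L n y x"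
  using ax1D[OF A1, of x n y y] by blast
lemma ax1_jcomm: "x \<in> pe_car L n \<Longrightarrow> y \<in> pe_car L n \<Longrightarrow> pe_join L n x y = pe_join L n y x"
  using ax1D[OF A1, of x n y y] by blast
lemma ax1_massoc: "x \<in> pe_car L n \<Longrightarrow> y \<in> pe_car L n \<Longrightarrow> z \<in> pe_car L n \<Longrightarrow>
    pe_meet L n x (pe_meet L n y z) = pe_meet L n (pe_meet L n x y) z"
  using ax1D[OF A1, of x n y z] by blast
lemma ax1_absJ: "x \<in> pe_car L n \<Longrightarrow> y \<in> pe_car L n \<Longrightarrow> pe_join L n x (pe_meet L n x y) = x"
  using ax1D[OF A1, of x n y y] by blast
lemma ax1_absM: "x \<in> pe_car L n \<Longrightarrow> y \<in> pe_car L n \<Longrightarrow> pe_meet L n x (pe_join L n x y) = x"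
  using ax1D[OF A1, of x n y y] by blast
lemma ax1_jbot: "x \<in> pe_car L n \<Longrightarrow> pe_join L n x (pe_bot L n) = x"
  using ax1D[OF A1, of x n x x] by blast
lemma ax1_mtop: "x \<in> pe_car L n \<Longrightarrow> pe_meet L n x (pe_top L n) = x"
  using ax1D[OF A1, of x n x x] by blast
end

context
  fixes L :: "'a pe_alg"
  assumes PA: "pe_algebra L"
begin
lemma alg_bot: "pe_bot L m \<in> pe_car L m" using PA unfolding pe_algebra_def by blast
lemma alg_top: "pe_top L m \<in> pe_car L m" using PA unfolding pe_algebra_def by blast
lemma alg_join: "x \<in> pe_car L m \<Longrightarrow> y \<in> pe_car L m \<Longrightarrow> pe_join L m x y \<in> pe_car L m"
  using PA unfolding pe_algebra_def by blast
lemma alg_meet: "x \<in> pe_car L m \<Longrightarrow> y \<in> pe_car L m \<Longrightarrow> pe_meet L m x y \<in> pe_car L m"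
  using PA unfolding pe_algebra_def by blast
lemma alg_sub: "sfun m k \<alpha> \<Longrightarrow> r \<in> pe_car L m \<Longrightarrow> pe_sub L m k \<alpha> r \<in> pe_car L k"
  using PA unfolding pe_algebra_def by blast
lemma alg_ex: "r \<in> pe_car L (Suc m) \<Longrightarrow> pe_ex L m r \<in> pe_car L m"
  using PA unfolding pe_algebra_def by blast
end

lemma meet_idem:
  assumes "ax1 L" "x \<in> pe_car L n" "pe_algebra L"
  shows "pe_meet L n x x = x"
proof -
  have b: "pe_bot L n \<in> pe_car L n" by (rule alg_bot[OF assms(3)])
  have mb: "pe_meet L n x (pe_bot L n) \<in> pe_car L n" by (rule alg_meet[OF assms(3) assms(2) b])
  have "pe_join L n x (pe_meet L n x (pe_bot L n)) = x" by (rule ax1_absJ[OF assms(1) assms(2) b])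
  then have "pe_meet L n x (pe_join L n x (pe_meet L n x (pe_bot L n))) = pe_meet L n x x" by simp
  moreover have "pe_meet L n x (pe_join L n x (pe_meet L n x (pe_bot L n))) = x"
    by (rule ax1_absM[OF assms(1) assms(2) mb])
  ultimately show ?thesis by simp
qed

lemma meet_le:
  assumes "ax1 L" "x \<in> pe_car L n" "y \<in> pe_car L n" "pe_algebra L"
  shows "pe_le L n (pe_meet L n x y) x" "pe_le L n (pe_meet L n x y) y"
proof -
  note A = ax1_massoc[OF assms(1)] and C = ax1_mcomm[OF assms(1)]
  have ix: "pe_meet L n x x = x" and iy: "pe_meet L n y y = y" using meet_idem assms by metis+
  have "pe_meet L n (pe_meet L n x y) x = pe_meet L n x (pe_meet L n y x)"
    using A[OF assms(2) assms(3) assms(2)] by simp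
  also have "\<dots> = pe_meet L n x (pe_meet L n x y)" using C[OF assms(3) assms(2)] by simp
  also have "\<dots> = pe_meet L n (pe_meet L n x x) y" using A[OF assms(2) assms(2) assms(3)] by simp
  also have "\<dots> = pe_meet L n x y" using ix by simp
  finally show "pe_le L n (pe_meet L n x y) x" unfolding pe_le_def by simp
  have "pe_meet L n (pe_meet L n x y) y = pe_meet L n x (pe_meet L n y y)"
    using A[OF assms(2) assms(3) assms(3)] by simp
  also have "\<dots> = pe_meet L n x y" using iy by simp
  finally show "pe_le L n (pe_meet L n x y) y" unfolding pe_le_def by simp
qed

lemma ax2D:
  assumes "ax2 L" "sfun m k \<alpha>"
  shows "pe_sub L m k \<alpha> (pe_bot L m) = pe_bot L k \<and> pe_sub L m k \<alpha> (pe_top L m) = pe_top L k \<and>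
     (\<forall>x\<in>pe_car L m. \<forall>y\<in>pe_car L m.
        pe_sub L m k \<alpha> (pe_join L m x y) = pe_join L k (pe_sub L m k \<alpha> x) (pe_sub L m k \<alpha> y) \<and>
        pe_sub L m k \<alpha> (pe_meet L m x y) = pe_meet L k (pe_sub L m k \<alpha> x) (pe_sub L m k \<alpha> y))"
  using assms(1)[unfolded ax2_def, rule_format, OF assms(2)] .

lemma ax2_bot: "ax2 L \<Longrightarrow> sfun m k \<alpha> \<Longrightarrow> pe_sub L m k \<alpha> (pe_bot L m) = pe_bot L k"
  by (drule (1) ax2D, erule conjunct1)
lemma ax2_top: "ax2 L \<Longrightarrow> sfun m k \<alpha> \<Longrightarrow> pe_sub L m k \<alpha> (pe_top L m) = pe_top L k"
  by (drule (1) ax2D, drule conjunct2, erule conjunct1)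
lemma ax2_jm:
  assumes "ax2 L" "sfun m k \<alpha>" "x \<in> pe_car L m" "y \<in> pe_car L m"
  shows "pe_sub L m k \<alpha> (pe_join L m x y) = pe_join L k (pe_sub L m k \<alpha> x) (pe_sub L m k \<alpha> y) \<and>
        pe_sub L m k \<alpha> (pe_meet L m x y) = pe_meet L k (pe_sub L m k \<alpha> x) (pe_sub L m k \<alpha> y)"
  using ax2D[OF assms(1,2), THEN conjunct2, THEN conjunct2, rule_format, OF assms(3,4)] .

lemma ax3D:
  assumes "ax3 L" "sfun k n \<alpha>" "sfun n m \<beta>" "r \<in> pe_car L k"
  shows "pe_sub L k m (\<beta> \<circ> \<alpha>) r = pe_sub L n m \<beta> (pe_sub L k n \<alpha> r)"
  using assms(1)[unfolded ax3_def, rule_format, OF assms(2) assms(3) assms(4)] .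

lemma ax8D:
  assumes "ax8 L" "r \<in> pe_car L (Suc n)"
  shows "pe_le L (Suc n) r (pe_sub L n (Suc n) (cyl n) (pe_ex L n r))"
  using assms(1)[unfolded ax8_def, rule_format, OF assms(2)] .

lemma sub_mono:
  assumes "ax2 L" "sfun m k \<gamma>" "r \<in> pe_car L m" "s \<in> pe_car L m" "pe_le L m r s"
  shows "pe_le L k (pe_sub L m k \<gamma> r) (pe_sub L m k \<gamma> s)"
proof -
  have "pe_sub L m k \<gamma> r = pe_sub L m k \<gamma> (pe_meet L m r s)"
    using assms(5) unfolding pe_le_def by (rule arg_cong)
  also have "\<dots> = pe_meet L k (pe_sub L m k \<gamma> r) (pe_sub L m k \<gamma> s)"
    using ax2_jm[OF assms(1) assms(2) assms(3) assms(4)] by (rule conjunct2)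
  finally show ?thesis unfolding pe_le_def .
qed

theorem lemma4p8:
  fixes L :: "'a pe_alg" and n :: nat and F :: "'a set" and Fs :: "nat \<Rightarrow> 'w"
  assumes "pe_algebra L" and "ax1 L" and "ax2 L" and "ax3 L" and "ax8 L"
    and "prime_filter L n F"
    and "inj_on Fs {1..n}"
  shows "almost_morphism L (Fs ` {1..n}) (phi_of L n F Fs)"
proof -
  let ?W = "Fs ` {1..n}"
  let ?P = "phi_of L n F Fs"
  let ?T = "\<lambda>k \<alpha>. tuple_sub k \<alpha> (map Fs [1..<Suc n])"
  note subcar = alg_sub[OF assms(1)] and botc = alg_bot[OF assms(1)] and topc = alg_top[OF assms(1)]
    and joinc = alg_join[OF assms(1)] and meetc = alg_meet[OF assms(1)] and exc = alg_ex[OF assms(1)]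
  note P = assms(6)[unfolded prime_filter_def]
  note pf = P[THEN conjunct1]
    P[THEN conjunct2, THEN conjunct1]
    P[THEN conjunct2, THEN conjunct2, THEN conjunct1]
    P[THEN conjunct2, THEN conjunct2, THEN conjunct2, THEN conjunct1, rule_format]
    P[THEN conjunct2, THEN conjunct2, THEN conjunct2, THEN conjunct2, THEN conjunct1, rule_format]
    P[THEN conjunct2, THEN conjunct2, THEN conjunct2, THEN conjunct2, THEN conjunct2, rule_format]
  note a2 = ax2_bot[OF assms(3)] ax2_jm[OF assms(3)]
  have botF: "pe_bot L n \<notin> F"
  proof
    assume b: "pe_bot L n \<in> F"
    have "pe_car L n \<subseteq> F"
    proof
      fix y assume y: "y \<in> pe_car L n"
      have bc: "pe_bot L n \<in> pe_car L n" by (rule botc)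
      have "pe_join L n y (pe_bot L n) = y" "pe_join L n (pe_bot L n) y = pe_join L n y (pe_bot L n)"
           "pe_meet L n (pe_bot L n) (pe_join L n (pe_bot L n) y) = pe_bot L n"
        using ax1_jbot[OF assms(2) y] ax1_jcomm[OF assms(2) bc y] ax1_absM[OF assms(2) bc y] by simp_all
      then have "pe_le L n (pe_bot L n) y" unfolding pe_le_def by simp
      then show "y \<in> F" by (rule pf(4)[OF b y])
    qed
    then have "F = pe_car L n" by (rule subset_antisym[OF pf(1)])
    then show False using pf(2) by simp
  qed
  have topF: "pe_top L n \<in> F"
  proof -
    obtain x where x: "x \<in> F" using pf(3) by blast
    have xc: "x \<in> pe_car L n" using x pf(1) by blast
    have tc: "pe_top L n \<in> pe_car L n" by (rule topc)
    have "pe_meet L n x (pe_top L n) = x" by (rule ax1_mtop[OF assms(2) xc])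
    then have "pe_le L n x (pe_top L n)" unfolding pe_le_def by simp
    then show ?thesis by (rule pf(4)[OF x tc])
  qed
  have c0: "?P k r \<subseteq> tuples ?W k" for k r
  proof
    fix xs assume "xs \<in> ?P k r"
    from phi_elem[OF this] obtain \<alpha> where a: "sfun k n \<alpha>" "xs = tuple_sub k \<alpha> (map Fs [1..<Suc n])"
      by (elim exE conjE)
    show "xs \<in> tuples ?W k" unfolding a(2) by (rule tl_in[OF a(1)])
  qed
  have c1: "\<forall>k. \<forall>r\<in>pe_car L k. ?P k r \<subseteq> tuples ?W k"
  proof (intro allI ballI)
    fix k r show "?P k r \<subseteq> tuples ?W k" by (rule c0)
  qed
  have c2: "\<forall>m k \<beta>. sfun m k \<beta> \<longrightarrow> (\<forall>r\<in>pe_car L m. ?P k (pe_sub L m k \<beta> r) = rel_sub ?W m k \<beta> (?P m r))"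
  proof (intro allI impI ballI)
    fix m k \<beta> r assume b: "sfun m k \<beta>" and r: "r \<in> pe_car L m"
    show "?P k (pe_sub L m k \<beta> r) = rel_sub ?W m k \<beta> (?P m r)"
    proof (rule phi_ext)
      fix \<alpha> assume a: "sfun k n \<alpha>"
      have comp: "pe_sub L m n (\<alpha> \<circ> \<beta>) r = pe_sub L k n \<alpha> (pe_sub L m k \<beta> r)"
        by (rule ax3D[OF assms(4) b a r])
      have "?T k \<alpha> \<in> ?P k (pe_sub L m k \<beta> r) \<longleftrightarrow> pe_sub L k n \<alpha> (pe_sub L m k \<beta> r) \<in> F"
        by (rule mem_phi[OF assms(7) a])
      also have "\<dots> \<longleftrightarrow> pe_sub L m n (\<alpha> \<circ> \<beta>) r \<in> F" using comp by simp
      also have "\<dots> \<longleftrightarrow> ?T m (\<alpha> \<circ> \<beta>) \<in> ?P m r" by (rule mem_phi[OF assms(7) sfun_comp[OF b a], symmetric])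
      also have "\<dots> \<longleftrightarrow> tuple_sub m \<beta> (?T k \<alpha>) \<in> ?P m r" by (simp only: tl_comp[OF b a])
      also have "\<dots> \<longleftrightarrow> ?T k \<alpha> \<in> rel_sub ?W m k \<beta> (?P m r)"
        unfolding rel_sub_def using tl_in[OF a, where Fs=Fs] by simp
      finally show "?T k \<alpha> \<in> ?P k (pe_sub L m k \<beta> r) \<longleftrightarrow> ?T k \<alpha> \<in> rel_sub ?W m k \<beta> (?P m r)" .
    next
      show "?P k (pe_sub L m k \<beta> r) \<subseteq> tuples ?W k" by (rule c0)
      show "rel_sub ?W m k \<beta> (?P m r) \<subseteq> tuples ?W k" unfolding rel_sub_def by blast
    qed
  qed
  have c3: "\<forall>k. ?P k (pe_bot L k) = {} \<and> ?P k (pe_top L k) = tuples ?W k"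
  proof
    fix k
    have "?P k (pe_bot L k) = {}"
    proof (rule phi_ext)
      fix \<alpha> assume a: "sfun k n \<alpha>"
      show "?T k \<alpha> \<in> ?P k (pe_bot L k) \<longleftrightarrow> ?T k \<alpha> \<in> {}"
        using mem_phi[OF assms(7) a, of L F "pe_bot L k"] ax2_bot[OF assms(3) a] botF by simp
    next
      show "?P k (pe_bot L k) \<subseteq> tuples ?W k" by (rule c0)
      show "{} \<subseteq> tuples ?W k" by simp
    qed
    moreover have "?P k (pe_top L k) = tuples ?W k"
    proof (rule phi_ext)
      fix \<alpha> assume a: "sfun k n \<alpha>"
      show "?T k \<alpha> \<in> ?P k (pe_top L k) \<longleftrightarrow> ?T k \<alpha> \<in> tuples ?W k"
        using mem_phi[OF assms(7) a, of L F "pe_top L k"] ax2_top[OF assms(3) a] topF tl_in[OF a, where Fs=Fs] by simp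
    next
      show "?P k (pe_top L k) \<subseteq> tuples ?W k" by (rule c0)
      show "tuples ?W k \<subseteq> tuples ?W k" by simp
    qed
    ultimately show "?P k (pe_bot L k) = {} \<and> ?P k (pe_top L k) = tuples ?W k" by (rule conjI)
  qed
  have c4: "\<forall>k. \<forall>x\<in>pe_car L k. \<forall>y\<in>pe_car L k.
        ?P k (pe_join L k x y) = ?P k x \<union> ?P k y \<and> ?P k (pe_meet L k x y) = ?P k x \<inter> ?P k y"
  proof (intro allI ballI)
    fix k x y assume x: "x \<in> pe_car L k" and y: "y \<in> pe_car L k"
    have J: "pe_sub L k n \<alpha> (pe_join L k x y) \<in> F \<longleftrightarrow> pe_sub L k n \<alpha> x \<in> F \<or> pe_sub L k n \<alpha> y \<in> F"
      and M: "pe_sub L k n \<alpha> (pe_meet L k x y) \<in> F \<longleftrightarrow> pe_sub L k n \<alpha> x \<in> F \<and> pe_sub L k n \<alpha> y \<in> F"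
      if a: "sfun k n \<alpha>" for \<alpha>
    proof -
      define u where "u = pe_sub L k n \<alpha> x"
      define v where "v = pe_sub L k n \<alpha> y"
      have u: "u \<in> pe_car L n" unfolding u_def by (rule subcar[OF a x])
      have v: "v \<in> pe_car L n" unfolding v_def by (rule subcar[OF a y])
      have jc: "pe_join L n u v \<in> pe_car L n" by (rule joinc[OF u v])
      have mc: "pe_meet L n u v \<in> pe_car L n" by (rule meetc[OF u v])
      have eq: "pe_sub L k n \<alpha> (pe_join L k x y) = pe_join L n u v"
              "pe_sub L k n \<alpha> (pe_meet L k x y) = pe_meet L n u v"
        using ax2_jm[OF assms(3) a x y] unfolding u_def v_def by simp_all
      have luj: "pe_le L n u (pe_join L n u v)" unfolding pe_le_def using ax1_absM[OF assms(2) u v] by simp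
      have lvj: "pe_le L n v (pe_join L n u v)"
      proof -
        have "pe_join L n u v = pe_join L n v u" by (rule ax1_jcomm[OF assms(2) u v])
        then show ?thesis unfolding pe_le_def using ax1_absM[OF assms(2) v u] by simp
      qed
      have lmu: "pe_le L n (pe_meet L n u v) u" by (rule meet_le(1)[OF assms(2) u v assms(1)])
      have lmv: "pe_le L n (pe_meet L n u v) v" by (rule meet_le(2)[OF assms(2) u v assms(1)])
      have "pe_join L n u v \<in> F \<longleftrightarrow> u \<in> F \<or> v \<in> F"
      proof
        assume "pe_join L n u v \<in> F" then show "u \<in> F \<or> v \<in> F" by (rule pf(6)[OF u v])
      next
        assume "u \<in> F \<or> v \<in> F"
        then show "pe_join L n u v \<in> F"
        proof
          assume "u \<in> F" then show ?thesis by (rule pf(4)[OF _ jc luj])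
        next
          assume "v \<in> F" then show ?thesis by (rule pf(4)[OF _ jc lvj])
        qed
      qed
      then show "pe_sub L k n \<alpha> (pe_join L k x y) \<in> F \<longleftrightarrow> pe_sub L k n \<alpha> x \<in> F \<or> pe_sub L k n \<alpha> y \<in> F"
        unfolding eq u_def v_def .
      have "pe_meet L n u v \<in> F \<longleftrightarrow> u \<in> F \<and> v \<in> F"
      proof
        assume m: "pe_meet L n u v \<in> F"
        show "u \<in> F \<and> v \<in> F"
        proof
          show "u \<in> F" by (rule pf(4)[OF m u lmu])
          show "v \<in> F" by (rule pf(4)[OF m v lmv])
        qed
      next
        assume "u \<in> F \<and> v \<in> F"
        then show "pe_meet L n u v \<in> F" using pf(5) by blast
      qed
      then show "pe_sub L k n \<alpha> (pe_meet L k x y) \<in> F \<longleftrightarrow> pe_sub L k n \<alpha> x \<in> F \<and> pe_sub L k n \<alpha> y \<in> F"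
        unfolding eq u_def v_def .
    qed
    have "?P k (pe_join L k x y) = ?P k x \<union> ?P k y"
    proof (rule phi_ext)
      fix \<alpha> assume a: "sfun k n \<alpha>"
      show "?T k \<alpha> \<in> ?P k (pe_join L k x y) \<longleftrightarrow> ?T k \<alpha> \<in> ?P k x \<union> ?P k y"
        using J[OF a] mem_phi[OF assms(7) a, of L F "pe_join L k x y"]
          mem_phi[OF assms(7) a, of L F x] mem_phi[OF assms(7) a, of L F y] by simp
    next
      show "?P k (pe_join L k x y) \<subseteq> tuples ?W k" by (rule c0)
      show "?P k x \<union> ?P k y \<subseteq> tuples ?W k" using c0[of k x] c0[of k y] by (rule Un_least)
    qed
    moreover have "?P k (pe_meet L k x y) = ?P k x \<inter> ?P k y"
    proof (rule phi_ext)
      fix \<alpha> assume a: "sfun k n \<alpha>"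
      show "?T k \<alpha> \<in> ?P k (pe_meet L k x y) \<longleftrightarrow> ?T k \<alpha> \<in> ?P k x \<inter> ?P k y"
        using M[OF a] mem_phi[OF assms(7) a, of L F "pe_meet L k x y"]
          mem_phi[OF assms(7) a, of L F x] mem_phi[OF assms(7) a, of L F y] by simp
    next
      show "?P k (pe_meet L k x y) \<subseteq> tuples ?W k" by (rule c0)
      show "?P k x \<inter> ?P k y \<subseteq> tuples ?W k" using c0[of k x] by blast
    qed
    ultimately show "?P k (pe_join L k x y) = ?P k x \<union> ?P k y \<and> ?P k (pe_meet L k x y) = ?P k x \<inter> ?P k y"
      by (rule conjI)
  qed
  have c5: "\<forall>k. \<forall>r\<in>pe_car L (Suc k). rel_ex ?W k (?P (Suc k) r) \<subseteq> ?P k (pe_ex L k r)"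
  proof (intro allI ballI subsetI)
    fix k r xs assume r: "r \<in> pe_car L (Suc k)" and "xs \<in> rel_ex ?W k (?P (Suc k) r)"
    then obtain y where y: "xs @ [y] \<in> ?P (Suc k) r" unfolding rel_ex_def by blast
    from phi_elem[OF y] obtain \<gamma> where g: "sfun (Suc k) n \<gamma>" "xs @ [y] = ?T (Suc k) \<gamma>" "pe_sub L (Suc k) n \<gamma> r \<in> F"
      by (elim exE conjE)
    have xs: "xs = ?T k (\<gamma> \<circ> cyl k)" using tl_cyl[OF g(1,2)] .
    let ?c = "pe_sub L k (Suc k) (cyl k) (pe_ex L k r)"
    have ec: "pe_ex L k r \<in> pe_car L k" by (rule exc[OF r])
    have cc: "?c \<in> pe_car L (Suc k)" using subcar[OF sfun_cyl ec] .
    have le: "pe_le L (Suc k) r ?c" by (rule ax8D[OF assms(5) r])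
    have "pe_le L n (pe_sub L (Suc k) n \<gamma> r) (pe_sub L (Suc k) n \<gamma> ?c)"
      using sub_mono[OF assms(3) g(1) r cc le] .
    then have "pe_sub L (Suc k) n \<gamma> ?c \<in> F" by (rule pf(4)[OF g(3) subcar[OF g(1) cc]])
    moreover have "pe_sub L k n (\<gamma> \<circ> cyl k) (pe_ex L k r) = pe_sub L (Suc k) n \<gamma> ?c"
      by (rule ax3D[OF assms(4) sfun_cyl g(1) ec])
    ultimately show "xs \<in> ?P k (pe_ex L k r)"
      using mem_phi[OF assms(7) sfun_comp[OF sfun_cyl g(1)], of L F "pe_ex L k r"] xs by simp
  qed
  show ?thesis unfolding almost_morphism_def by (intro conjI c1 c2 c3 c4 c5)
qed

end
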